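(* Let $b>0$ and consider the Born–Infeld Lagrangian $L(F,G)=\sqrt{b^4+\tfrac12 b^2F-\tfrac1{16}G^2}-b^2$ on the region where $b^4+\tfrac12b^2F-\tfrac1{16}G^2>0$. Then (i) the quantities $\Omega_1,\Omega_2,\Omega_3$ (formed from $L_F,L_{FF},L_{FG},L_{GG},F,G$ as below) vanish identically on this region; and (ii) for any antisymmetric background $F_{\mu\nu}$ in this region, antisymmetric $f_{\mu\nu}$ and covector $k_\lambda$ satisfying (C) $f_{\mu\nu}k_\lambda+f_{\nu\lambda}k_\mu+f_{\lambda\mu}k_\nu=0$ and (E) $L_F f^{\mu\nu}k_\nu+A F^{\mu\nu}k_\nu+B\tilde F^{\mu\nu}k_\nu=0$ with $A\neq0$, one has $$\Big[\big(b^2+\tfrac12F\big)\eta^{\mu\nu}+F^{\mu}{}_{\lambda}F^{\lambda\nu}\Big]k_\mu k_\nu=0.$$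
   Context: Minkowski metric $\eta_{\mu\nu}=\mathrm{diag}(1,-1,-1,-1)$, indices raised/lowered with $\eta$. $F=F^{\mu\nu}F_{\mu\nu}$, $G=F^{\mu\nu}\tilde F_{\mu\nu}$, with dual $\tilde F_{\alpha\beta}=\tfrac12\eta_{\alpha\beta}{}^{\mu\nu}F_{\mu\nu}$ (Levi-Civita tensor), so that $\tilde F_{\mu\nu}F^{\nu\lambda}=-\tfrac14G\delta_\mu^\lambda$ and $\tilde F_{\mu\lambda}\tilde F^{\lambda\nu}-F_{\mu\lambda}F^{\lambda\nu}=\tfrac12F\delta_\mu^\nu$. Subscripts denote partial derivatives of $L$ evaluated at $(F,G)$. $\xi=F^{\alpha\beta}f_{\alpha\beta}$, $\zeta=\tilde F^{\alpha\beta}f_{\alpha\beta}$, $A=2(\xi L_{FF}+\zeta L_{FG})$, $B=2(\xi L_{FG}+\zeta L_{GG})$. $\Omega_1=-L_FL_{FG}+2FL_{FG}L_{GG}+G(L_{GG}^2-L_{FG}^2)$, $\Omega_2=(L_F+2GL_{FG})(L_{GG}-L_{FF})+2F(L_{FF}L_{GG}+L_{FG}^2)$, $\Omega_3=L_FL_{FG}+2FL_{FF}L_{FG}+G(L_{FG}^2-L_{FF}^2)$. *)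

theory Defs
  imports "HOL-Analysis.Analysis"
begin

text \<open>Spacetime indices are natural numbers 0,1,2,3; tensors are functions of
  their indices (only values at indices < 4 matter). A covariant 2-tensor
  T_{mu nu} is a function nat => nat => real, a covector k_mu is nat => real.\<close>

text \<open>Minkowski metric diag(1,-1,-1,-1); numerically the same for eta_{mu nu}
  and eta^{mu nu}.\<close>
definition eta :: "nat \<Rightarrow> nat \<Rightarrow> real" where
  "eta \<mu> \<nu> = (if \<mu> = \<nu> then (if \<mu> = 0 then 1 else -1) else 0)"

definition raise2 :: "(nat \<Rightarrow> nat \<Rightarrow> real) \<Rightarrow> nat \<Rightarrow> nat \<Rightarrow> real" where
  "raise2 T \<mu> \<nu> = (\<Sum>\<alpha><4. \<Sum>\<beta><4. eta \<mu> \<alpha> * eta \<nu> \<beta> * T \<alpha> \<beta>)"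

definition raise1 :: "(nat \<Rightarrow> nat \<Rightarrow> real) \<Rightarrow> nat \<Rightarrow> nat \<Rightarrow> real" where
  "raise1 T \<mu> l = (\<Sum>\<alpha><4. eta \<mu> \<alpha> * T \<alpha> l)"

text \<open>Covariant Levi-Civita tensor with epsilon_{0123} = 1: for indices in
  {0..3} the Vandermonde product of differences divided by 1!2!3! = 12 is the
  sign of the permutation (and 0 if two indices coincide).\<close>
definition levi :: "nat \<Rightarrow> nat \<Rightarrow> nat \<Rightarrow> nat \<Rightarrow> real" where
  "levi a b c d =
     (real b - real a) * (real c - real a) * (real d - real a) *
     (real c - real b) * (real d - real b) * (real d - real c) / 12"

definition dual :: "(nat \<Rightarrow> nat \<Rightarrow> real) \<Rightarrow> nat \<Rightarrow> nat \<Rightarrow> real" where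
  "dual T \<alpha> \<beta> = 1/2 * (\<Sum>\<mu><4. \<Sum>\<nu><4.
      (\<Sum>\<gamma><4. \<Sum>\<delta><4. levi \<alpha> \<beta> \<gamma> \<delta> * eta \<gamma> \<mu> * eta \<delta> \<nu>) * T \<mu> \<nu>)"

definition antisym2 :: "(nat \<Rightarrow> nat \<Rightarrow> real) \<Rightarrow> bool" where
  "antisym2 T \<longleftrightarrow> (\<forall>\<mu><4. \<forall>\<nu><4. T \<mu> \<nu> = - T \<nu> \<mu>)"

definition invF :: "(nat \<Rightarrow> nat \<Rightarrow> real) \<Rightarrow> real" where
  "invF T = (\<Sum>\<mu><4. \<Sum>\<nu><4. raise2 T \<mu> \<nu> * T \<mu> \<nu>)"

definition invG :: "(nat \<Rightarrow> nat \<Rightarrow> real) \<Rightarrow> real" where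
  "invG T = (\<Sum>\<mu><4. \<Sum>\<nu><4. raise2 T \<mu> \<nu> * dual T \<mu> \<nu>)"

definition LF :: "(real \<Rightarrow> real \<Rightarrow> real) \<Rightarrow> real \<Rightarrow> real \<Rightarrow> real" where
  "LF L x y = deriv (\<lambda>t. L t y) x"
definition LG :: "(real \<Rightarrow> real \<Rightarrow> real) \<Rightarrow> real \<Rightarrow> real \<Rightarrow> real" where
  "LG L x y = deriv (\<lambda>s. L x s) y"
definition LFF :: "(real \<Rightarrow> real \<Rightarrow> real) \<Rightarrow> real \<Rightarrow> real \<Rightarrow> real" where
  "LFF L x y = deriv (\<lambda>t. LF L t y) x"
definition LFG :: "(real \<Rightarrow> real \<Rightarrow> real) \<Rightarrow> real \<Rightarrow> real \<Rightarrow> real" where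
  "LFG L x y = deriv (\<lambda>s. LF L x s) y"
definition LGG :: "(real \<Rightarrow> real \<Rightarrow> real) \<Rightarrow> real \<Rightarrow> real \<Rightarrow> real" where
  "LGG L x y = deriv (\<lambda>s. LG L x s) y"

definition Omega1 :: "(real \<Rightarrow> real \<Rightarrow> real) \<Rightarrow> real \<Rightarrow> real \<Rightarrow> real" where
  "Omega1 L x y = - LF L x y * LFG L x y + 2 * x * LFG L x y * LGG L x y
     + y * ((LGG L x y)\<^sup>2 - (LFG L x y)\<^sup>2)"
definition Omega2 :: "(real \<Rightarrow> real \<Rightarrow> real) \<Rightarrow> real \<Rightarrow> real \<Rightarrow> real" where
  "Omega2 L x y = (LF L x y + 2 * y * LFG L x y) * (LGG L x y - LFF L x y)
     + 2 * x * (LFF L x y * LGG L x y + (LFG L x y)\<^sup>2)"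
definition Omega3 :: "(real \<Rightarrow> real \<Rightarrow> real) \<Rightarrow> real \<Rightarrow> real \<Rightarrow> real" where
  "Omega3 L x y = LF L x y * LFG L x y + 2 * x * LFF L x y * LFG L x y
     + y * ((LFG L x y)\<^sup>2 - (LFF L x y)\<^sup>2)"

definition BI :: "real \<Rightarrow> real \<Rightarrow> real \<Rightarrow> real" where
  "BI b x y = sqrt (b^4 + 1/2 * b\<^sup>2 * x - 1/16 * y\<^sup>2) - b\<^sup>2"

definition BIregion :: "real \<Rightarrow> real \<Rightarrow> real \<Rightarrow> bool" where
  "BIregion b x y \<longleftrightarrow> b^4 + 1/2 * b\<^sup>2 * x - 1/16 * y\<^sup>2 > 0"

end

theory Submission
  imports Defs
begin


definition Rb :: "real \<Rightarrow> real \<Rightarrow> real \<Rightarrow> real" where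
  "Rb b x y = b^4 + 1/2 * b\<^sup>2 * x - 1/16 * y\<^sup>2"

lemma BI_Rb: "BI b = (\<lambda>x y. sqrt (Rb b x y) - b\<^sup>2)"
  by (auto simp: BI_def Rb_def fun_eq_iff)

lemma region_Rb: "BIregion b x y \<longleftrightarrow> Rb b x y > 0"
  by (simp add: BIregion_def Rb_def)

lemma ev_F: "Rb b x y > 0 \<Longrightarrow> eventually (\<lambda>t. Rb b t y > 0) (nhds x)"
proof -
  assume h: "Rb b x y > 0"
  have "open {t. (0::real) < Rb b t y}"
    by (rule open_Collect_less) (auto simp: Rb_def intro!: continuous_intros)
  then show ?thesis using h eventually_nhds_in_open by fastforce
qed

lemma ev_G: "Rb b x y > 0 \<Longrightarrow> eventually (\<lambda>s. Rb b x s > 0) (nhds y)"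
proof -
  assume h: "Rb b x y > 0"
  have "open {s. (0::real) < Rb b x s}"
    by (rule open_Collect_less) (auto simp: Rb_def intro!: continuous_intros)
  then show ?thesis using h eventually_nhds_in_open by fastforce
qed

lemma LF_BI: assumes "Rb b x y > 0"
  shows "LF (BI b) x y = b\<^sup>2 / (4 * sqrt (Rb b x y))"
proof -
  have "((\<lambda>t. sqrt (Rb b t y) - b\<^sup>2) has_real_derivative (inverse (sqrt (Rb b x y)) / 2 * (1/2*b\<^sup>2))) (at x)"
    unfolding Rb_def using assms unfolding Rb_def
    by (auto intro!: derivative_eq_intros)
  then show ?thesis unfolding LF_def BI_Rb
    by (rule DERIV_imp_deriv[THEN trans]) (simp add: field_simps)
qed

lemma LG_BI: assumes "Rb b x y > 0"
  shows "LG (BI b) x y = - y / (16 * sqrt (Rb b x y))"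
proof -
  have "((\<lambda>s. sqrt (Rb b x s) - b\<^sup>2) has_real_derivative (inverse (sqrt (Rb b x y)) / 2 * (- 1/8*y))) (at y)"
    unfolding Rb_def using assms unfolding Rb_def
    by (auto intro!: derivative_eq_intros)
  then show ?thesis unfolding LG_def BI_Rb
    by (rule DERIV_imp_deriv[THEN trans]) (simp add: field_simps)
qed

lemma sq_facts: assumes "Rb b x y > 0"
  shows "sqrt (Rb b x y) > 0" "(sqrt (Rb b x y))\<^sup>2 = Rb b x y" "sqrt (Rb b x y) * sqrt (Rb b x y) = Rb b x y"
  using assms by (auto simp: power2_eq_square[symmetric])

lemma LFF_BI: assumes "Rb b x y > 0"
  shows "LFF (BI b) x y = - (b^4) / (16 * Rb b x y * sqrt (Rb b x y))"
proof -
  note sq = sq_facts[OF assms]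
  have e: "eventually (\<lambda>t. LF (BI b) t y = b\<^sup>2 / (4 * sqrt (Rb b t y))) (nhds x)"
    using ev_F[OF assms] by eventually_elim (rule LF_BI)
  have "((\<lambda>t. b\<^sup>2 / (4 * sqrt (Rb b t y))) has_real_derivative
     (- (b\<^sup>2 * (4 * (inverse (sqrt (Rb b x y)) / 2 * (1/2*b\<^sup>2)))) / (4 * sqrt (Rb b x y))\<^sup>2)) (at x)"
    unfolding Rb_def using assms unfolding Rb_def
    by (auto intro!: derivative_eq_intros simp: power2_eq_square)
  moreover have "(- (b\<^sup>2 * (4 * (inverse (sqrt (Rb b x y)) / 2 * (1/2*b\<^sup>2)))) / (4 * sqrt (Rb b x y))\<^sup>2)
     = - (b^4) / (16 * Rb b x y * sqrt (Rb b x y))"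
    using sq by (simp add: field_simps power2_eq_square) (simp add: power_def mult.assoc)?
  ultimately have "deriv (\<lambda>t. b\<^sup>2 / (4 * sqrt (Rb b t y))) x = - (b^4) / (16 * Rb b x y * sqrt (Rb b x y))"
    using DERIV_imp_deriv by metis
  then show ?thesis unfolding LFF_def using deriv_cong_ev[OF e refl] by simp
qed

lemma dRG: "((\<lambda>s. Rb b x s) has_real_derivative (- (y/8))) (at y)"
  unfolding Rb_def by (auto intro!: derivative_eq_intros)

lemma dsqG: assumes "Rb b x y > 0"
  shows "((\<lambda>s. 4 * sqrt (Rb b x s)) has_real_derivative (4 * (inverse (sqrt (Rb b x y)) / 2 * (- (y/8))))) (at y)"
  by (rule DERIV_cmult[OF DERIV_chain2[OF DERIV_real_sqrt[OF assms] dRG]])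

lemma LFG_BI: assumes "Rb b x y > 0"
  shows "LFG (BI b) x y = b\<^sup>2 * y / (64 * Rb b x y * sqrt (Rb b x y))"
proof -
  note sq = sq_facts[OF assms]
  have e: "eventually (\<lambda>s. LF (BI b) x s = b\<^sup>2 / (4 * sqrt (Rb b x s))) (nhds y)"
    using ev_G[OF assms] by eventually_elim (rule LF_BI)
  have "((\<lambda>s. b\<^sup>2 / (4 * sqrt (Rb b x s))) has_real_derivative
     (b\<^sup>2 * y / (64 * Rb b x y * sqrt (Rb b x y)))) (at y)"
    apply (rule DERIV_cong[OF DERIV_divide[OF DERIV_const dsqG[OF assms]]])
    using sq apply simp
    using sq apply (simp add: field_simps)
    done
  then have "deriv (\<lambda>s. b\<^sup>2 / (4 * sqrt (Rb b x s))) y = b\<^sup>2 * y / (64 * Rb b x y * sqrt (Rb b x y))"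
    using DERIV_imp_deriv by metis
  then show ?thesis unfolding LFG_def using deriv_cong_ev[OF e refl] by simp
qed

lemma dsqG16: assumes "Rb b x y > 0"
  shows "((\<lambda>s. 16 * sqrt (Rb b x s)) has_real_derivative (16 * (inverse (sqrt (Rb b x y)) / 2 * (- (y/8))))) (at y)"
  by (rule DERIV_cmult[OF DERIV_chain2[OF DERIV_real_sqrt[OF assms] dRG]])

lemma LGG_BI: assumes "Rb b x y > 0"
  shows "LGG (BI b) x y = - 1 / (16 * sqrt (Rb b x y)) - y\<^sup>2 / (256 * Rb b x y * sqrt (Rb b x y))"
proof -
  note sq = sq_facts[OF assms]
  have e: "eventually (\<lambda>s. LG (BI b) x s = - s / (16 * sqrt (Rb b x s))) (nhds y)"
    using ev_G[OF assms] by eventually_elim (rule LG_BI)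
  have dm: "((\<lambda>s::real. - s) has_real_derivative (-1)) (at y)"
    by (auto intro!: derivative_eq_intros)
  have "((\<lambda>s. - s / (16 * sqrt (Rb b x s))) has_real_derivative
     (- 1 / (16 * sqrt (Rb b x y)) - y\<^sup>2 / (256 * Rb b x y * sqrt (Rb b x y)))) (at y)"
    apply (rule DERIV_cong[OF DERIV_divide[OF dm dsqG16[OF assms]]])
    using sq apply simp
    using sq apply (simp add: field_simps power2_eq_square)
    done
  then have "deriv (\<lambda>s. - s / (16 * sqrt (Rb b x s))) y = - 1 / (16 * sqrt (Rb b x y)) - y\<^sup>2 / (256 * Rb b x y * sqrt (Rb b x y))"
    using DERIV_imp_deriv by metis
  then show ?thesis unfolding LGG_def using deriv_cong_ev[OF e refl] by simp
qed

lemma om_alg: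
  fixes b x y s :: real
  assumes b: "b > 0" and s: "s > 0" and r: "s\<^sup>2 = b^4 + 1/2 * b\<^sup>2 * x - 1/16 * y\<^sup>2"
  defines "lf \<equiv> b\<^sup>2 / (4 * s)" and "lff \<equiv> - (b^4) / (16 * s\<^sup>2 * s)"
    and "lfg \<equiv> b\<^sup>2 * y / (64 * s\<^sup>2 * s)" and "lgg \<equiv> - 1 / (16 * s) - y\<^sup>2 / (256 * s\<^sup>2 * s)"
  shows "- lf * lfg + 2 * x * lfg * lgg + y * (lgg\<^sup>2 - lfg\<^sup>2) = 0"
    "(lf + 2 * y * lfg) * (lgg - lff) + 2 * x * (lff * lgg + lfg\<^sup>2) = 0"
    "lf * lfg + 2 * x * lff * lfg + y * (lfg\<^sup>2 - lff\<^sup>2) = 0"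
proof -
  have x: "x = 2 * (s\<^sup>2 - b^4 + y\<^sup>2/16) / b\<^sup>2" using r b by (simp add: field_simps)
  show "- lf * lfg + 2 * x * lfg * lgg + y * (lgg\<^sup>2 - lfg\<^sup>2) = 0"
    unfolding x lf_def lff_def lfg_def lgg_def using b s by (simp add: field_simps) algebra
  show "(lf + 2 * y * lfg) * (lgg - lff) + 2 * x * (lff * lgg + lfg\<^sup>2) = 0"
    unfolding x lf_def lff_def lfg_def lgg_def using b s by (simp add: field_simps) algebra
  show "lf * lfg + 2 * x * lff * lfg + y * (lfg\<^sup>2 - lff\<^sup>2) = 0"
    unfolding x lf_def lff_def lfg_def lgg_def using b s by (simp add: field_simps) algebra
qed



lemma sum4: "(\<Sum>i<(4::nat). g i) = g 0 + g 1 + g 2 + g 3"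
  by (simp add: eval_nat_numeral)

lemma lt4: "(i::nat) < 4 \<Longrightarrow> i = 0 \<or> i = 1 \<or> i = 2 \<or> i = 3" by auto

lemma raise2_eq: "\<mu> < 4 \<Longrightarrow> \<nu> < 4 \<Longrightarrow> raise2 T \<mu> \<nu> = eta \<mu> \<mu> * eta \<nu> \<nu> * T \<mu> \<nu>"
  unfolding raise2_def sum4 by (auto simp: eta_def dest!: lt4)

lemma raise1_eq: "\<mu> < 4 \<Longrightarrow> raise1 T \<mu> l = eta \<mu> \<mu> * T \<mu> l"
  unfolding raise1_def sum4 by (auto simp: eta_def dest!: lt4)

lemma eta_vals: "eta 0 0 = 1" "eta 0 1 = 0" "eta 0 2 = 0" "eta 0 3 = 0" "eta 1 0 = 0" "eta 1 1 = -1" "eta 1 2 = 0" "eta 1 3 = 0" "eta 2 0 = 0" "eta 2 1 = 0" "eta 2 2 = -1" "eta 2 3 = 0" "eta 3 0 = 0" "eta 3 1 = 0" "eta 3 2 = 0" "eta 3 3 = -1"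
  by (simp_all add: eta_def)

lemma anti_simps: assumes "antisym2 T"
  shows "T 0 0 = 0 \<and> T 1 1 = 0 \<and> T 2 2 = 0 \<and> T 3 3 = 0 \<and> T 1 0 = - T 0 1 \<and> T 2 0 = - T 0 2
    \<and> T 3 0 = - T 0 3 \<and> T 2 1 = - T 1 2 \<and> T 3 1 = - T 1 3 \<and> T 3 2 = - T 2 3"
proof -
  have "\<And>i j. i < 4 \<Longrightarrow> j < 4 \<Longrightarrow> T i j = - T j i" using assms unfolding antisym2_def by blast
  from this[of 0 0] this[of 1 1] this[of 2 2] this[of 3 3] this[of 1 0] this[of 2 0] this[of 3 0]
    this[of 2 1] this[of 3 1] this[of 3 2]
  show ?thesis by simp
qed

lemma dual_vals: "dual T 0 0 = 0" "dual T 0 1 =  T 2 3" "dual T 0 2 = - T 1 3" "dual T 0 3 =  T 1 2"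
  "dual T 1 0 = - T 2 3" "dual T 1 1 = 0" "dual T 1 2 = - T 0 3" "dual T 1 3 =  T 0 2"
  "dual T 2 0 =  T 1 3" "dual T 2 1 =  T 0 3" "dual T 2 2 = 0" "dual T 2 3 = - T 0 1"
  "dual T 3 0 = - T 1 2" "dual T 3 1 = - T 0 2" "dual T 3 2 =  T 0 1" "dual T 3 3 = 0"
  if "antisym2 T"
  using anti_simps[OF that] by (simp_all add: dual_def sum4 levi_def eta_def)

lemma key:
  assumes aF: "antisym2 Fb" and af: "antisym2 f"
  shows "(\<Sum>\<mu><4. (\<Sum>\<nu><4. Fb \<mu> \<nu> * eta \<nu> \<nu> * k \<nu>) *
            (lf * (\<Sum>\<nu><4. raise2 f \<mu> \<nu> * k \<nu>) + a * (\<Sum>\<nu><4. raise2 Fb \<mu> \<nu> * k \<nu>)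
             + bb * (\<Sum>\<nu><4. raise2 (dual Fb) \<mu> \<nu> * k \<nu>)))
   = lf * (\<Sum>\<alpha><4. \<Sum>\<beta><4. raise2 Fb \<alpha> \<beta> * f \<alpha> \<beta>) / 2 * (\<Sum>\<mu><4. \<Sum>\<nu><4. eta \<mu> \<nu> * k \<mu> * k \<nu>)
     - a * (\<Sum>\<mu><4. \<Sum>\<nu><4. (\<Sum>l<4. raise1 Fb \<mu> l * raise2 Fb l \<nu>) * k \<mu> * k \<nu>)
     + bb * invG Fb / 4 * (\<Sum>\<mu><4. \<Sum>\<nu><4. eta \<mu> \<nu> * k \<mu> * k \<nu>)
     - lf / 2 * (\<Sum>l<4. eta l l * k l * (\<Sum>\<mu><4. \<Sum>\<nu><4. raise2 Fb \<mu> \<nu> *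
          (f \<mu> \<nu> * k l + f \<nu> l * k \<mu> + f l \<mu> * k \<nu>)))"
  unfolding invG_def sum4
  apply (simp add: One_nat_def raise2_eq raise1_eq eta_vals[unfolded One_nat_def]
     anti_simps[OF aF, unfolded One_nat_def] anti_simps[OF af, unfolded One_nat_def] dual_vals[OF aF, unfolded One_nat_def])
  apply algebra
  done




lemma br_alg:
  fixes b x y s xi ze :: real
  assumes b: "b > 0" and s: "s > 0" and r: "s\<^sup>2 = b^4 + 1/2 * b\<^sup>2 * x - 1/16 * y\<^sup>2"
  defines "lf \<equiv> b\<^sup>2 / (4 * s)" and "lff \<equiv> - (b^4) / (16 * s\<^sup>2 * s)"
    and "lfg \<equiv> b\<^sup>2 * y / (64 * s\<^sup>2 * s)" and "lgg \<equiv> - 1 / (16 * s) - y\<^sup>2 / (256 * s\<^sup>2 * s)"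
  shows "lf * xi / 2 + 2 * (xi * lfg + ze * lgg) * y / 4 + (b\<^sup>2 + 1/2 * x) * (2 * (xi * lff + ze * lfg)) = 0"
proof -
  have x: "x = 2 * (s\<^sup>2 - b^4 + y\<^sup>2/16) / b\<^sup>2" using r b by (simp add: field_simps)
  show ?thesis
    unfolding x lf_def lff_def lfg_def lgg_def using b s by (simp add: field_simps) algebra
qed

lemma sum_zero4: "(\<And>i. i < 4 \<Longrightarrow> g i = (0::real)) \<Longrightarrow> (\<Sum>i<(4::nat). g i) = 0"
  by (simp add: sum4)

lemma concl_split:
  "(\<Sum>\<mu><4. \<Sum>\<nu><4. ((c::real) * eta \<mu> \<nu> + M \<mu> \<nu>) * k \<mu> * k \<nu>)
   = c * (\<Sum>\<mu><4. \<Sum>\<nu><4. eta \<mu> \<nu> * k \<mu> * k \<nu>) + (\<Sum>\<mu><4. \<Sum>\<nu><4. M \<mu> \<nu> * k \<mu> * k \<nu>)"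
  by (simp add: sum4 algebra_simps)

theorem mainTheorem4:
  fixes b :: real
  assumes "b > 0"
  shows "(\<forall>x y. BIregion b x y \<longrightarrow>
            Omega1 (BI b) x y = 0 \<and> Omega2 (BI b) x y = 0 \<and> Omega3 (BI b) x y = 0)
     \<and> (\<forall>(Fb :: nat \<Rightarrow> nat \<Rightarrow> real) (f :: nat \<Rightarrow> nat \<Rightarrow> real) (k :: nat \<Rightarrow> real).
          antisym2 Fb \<longrightarrow> antisym2 f \<longrightarrow> BIregion b (invF Fb) (invG Fb) \<longrightarrow>
          (\<forall>\<mu><4. \<forall>\<nu><4. \<forall>l<4. f \<mu> \<nu> * k l + f \<nu> l * k \<mu> + f l \<mu> * k \<nu> = 0) \<longrightarrow>
          (let xi = (\<Sum>\<alpha><4. \<Sum>\<beta><4. raise2 Fb \<alpha> \<beta> * f \<alpha> \<beta>);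
               zeta = (\<Sum>\<alpha><4. \<Sum>\<beta><4. raise2 (dual Fb) \<alpha> \<beta> * f \<alpha> \<beta>);
               x = invF Fb; y = invG Fb;
               A = 2 * (xi * LFF (BI b) x y + zeta * LFG (BI b) x y);
               B = 2 * (xi * LFG (BI b) x y + zeta * LGG (BI b) x y)
           in (\<forall>\<mu><4. LF (BI b) x y * (\<Sum>\<nu><4. raise2 f \<mu> \<nu> * k \<nu>)
                      + A * (\<Sum>\<nu><4. raise2 Fb \<mu> \<nu> * k \<nu>)
                      + B * (\<Sum>\<nu><4. raise2 (dual Fb) \<mu> \<nu> * k \<nu>) = 0) \<longrightarrow>
              A \<noteq> 0 \<longrightarrow>
              (\<Sum>\<mu><4. \<Sum>\<nu><4.
                 ((b\<^sup>2 + 1/2 * x) * eta \<mu> \<nu>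
                  + (\<Sum>l<4. raise1 Fb \<mu> l * raise2 Fb l \<nu>)) * k \<mu> * k \<nu>) = 0))"
  
proof -
  have P1: "\<forall>x y. BIregion b x y \<longrightarrow>
            Omega1 (BI b) x y = 0 \<and> Omega2 (BI b) x y = 0 \<and> Omega3 (BI b) x y = 0"
  proof (intro allI impI)
    fix x y assume "BIregion b x y"
    then have R: "Rb b x y > 0" by (simp add: region_Rb)
    note sq = sq_facts[OF R]
    have r: "(sqrt (Rb b x y))\<^sup>2 = b^4 + 1/2 * b\<^sup>2 * x - 1/16 * y\<^sup>2" using sq(2) by (simp add: Rb_def)
    note om = om_alg[OF assms sq(1) r]
    have R2: "Rb b x y = (sqrt (Rb b x y))\<^sup>2" using sq(2) by simp
    show "Omega1 (BI b) x y = 0 \<and> Omega2 (BI b) x y = 0 \<and> Omega3 (BI b) x y = 0"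
      unfolding Omega1_def Omega2_def Omega3_def LF_BI[OF R] LFF_BI[OF R] LFG_BI[OF R] LGG_BI[OF R]
      using om by (metis R2)
  qed
  show ?thesis
  proof (intro conjI P1 allI impI)
    fix Fb f :: "nat \<Rightarrow> nat \<Rightarrow> real" and k :: "nat \<Rightarrow> real"
    assume aF: "antisym2 Fb" and af: "antisym2 f" and reg: "BIregion b (invF Fb) (invG Fb)"
      and C: "\<forall>\<mu><4. \<forall>\<nu><4. \<forall>l<4. f \<mu> \<nu> * k l + f \<nu> l * k \<mu> + f l \<mu> * k \<nu> = 0"
    define x where "x = invF Fb"
    define y where "y = invG Fb"
    define xi where "xi = (\<Sum>\<alpha><4. \<Sum>\<beta><4. raise2 Fb \<alpha> \<beta> * f \<alpha> \<beta>)"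
    define ze where "ze = (\<Sum>\<alpha><4. \<Sum>\<beta><4. raise2 (dual Fb) \<alpha> \<beta> * f \<alpha> \<beta>)"
    define A where "A = 2 * (xi * LFF (BI b) x y + ze * LFG (BI b) x y)"
    define B where "B = 2 * (xi * LFG (BI b) x y + ze * LGG (BI b) x y)"
    define lf where "lf = LF (BI b) x y"
    define K where "K = (\<Sum>\<mu><4. \<Sum>\<nu><4. eta \<mu> \<nu> * k \<mu> * k \<nu>)"
    define Q2 where "Q2 = (\<Sum>\<mu><4. \<Sum>\<nu><4. (\<Sum>l<4. raise1 Fb \<mu> l * raise2 Fb l \<nu>) * k \<mu> * k \<nu>)"
    have R: "Rb b x y > 0" using reg by (simp add: region_Rb x_def y_def)
    note sq = sq_facts[OF R]
    have r: "(sqrt (Rb b x y))\<^sup>2 = b^4 + 1/2 * b\<^sup>2 * x - 1/16 * y\<^sup>2" using sq(2) by (simp add: Rb_def)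
    have R2: "Rb b x y = (sqrt (Rb b x y))\<^sup>2" using sq(2) by simp
    have br: "lf * xi / 2 + B * y / 4 + (b\<^sup>2 + 1/2 * x) * A = 0"
      using br_alg[OF assms sq(1) r, of xi ze]
      unfolding lf_def A_def B_def LF_BI[OF R] LFF_BI[OF R] LFG_BI[OF R] LGG_BI[OF R]
      by (metis R2)
    show "let xi = (\<Sum>\<alpha><4. \<Sum>\<beta><4. raise2 Fb \<alpha> \<beta> * f \<alpha> \<beta>);
               zeta = (\<Sum>\<alpha><4. \<Sum>\<beta><4. raise2 (dual Fb) \<alpha> \<beta> * f \<alpha> \<beta>);
               x = invF Fb; y = invG Fb;
               A = 2 * (xi * LFF (BI b) x y + zeta * LFG (BI b) x y);
               B = 2 * (xi * LFG (BI b) x y + zeta * LGG (BI b) x y)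
           in (\<forall>\<mu><4. LF (BI b) x y * (\<Sum>\<nu><4. raise2 f \<mu> \<nu> * k \<nu>)
                      + A * (\<Sum>\<nu><4. raise2 Fb \<mu> \<nu> * k \<nu>)
                      + B * (\<Sum>\<nu><4. raise2 (dual Fb) \<mu> \<nu> * k \<nu>) = 0) \<longrightarrow>
              A \<noteq> 0 \<longrightarrow>
              (\<Sum>\<mu><4. \<Sum>\<nu><4.
                 ((b\<^sup>2 + 1/2 * x) * eta \<mu> \<nu>
                  + (\<Sum>l<4. raise1 Fb \<mu> l * raise2 Fb l \<nu>)) * k \<mu> * k \<nu>) = 0"
      unfolding Let_def xi_def[symmetric] ze_def[symmetric] x_def[symmetric] y_def[symmetric]
        A_def[symmetric] B_def[symmetric] lf_def[symmetric]
    proof (intro impI)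
      assume E: "\<forall>\<mu><4. lf * (\<Sum>\<nu><4. raise2 f \<mu> \<nu> * k \<nu>)
                      + A * (\<Sum>\<nu><4. raise2 Fb \<mu> \<nu> * k \<nu>)
                      + B * (\<Sum>\<nu><4. raise2 (dual Fb) \<mu> \<nu> * k \<nu>) = 0"
        and An: "A \<noteq> 0"
      have s1: "(\<Sum>\<mu><4. (\<Sum>\<nu><4. Fb \<mu> \<nu> * eta \<nu> \<nu> * k \<nu>) *
            (lf * (\<Sum>\<nu><4. raise2 f \<mu> \<nu> * k \<nu>) + A * (\<Sum>\<nu><4. raise2 Fb \<mu> \<nu> * k \<nu>)
             + B * (\<Sum>\<nu><4. raise2 (dual Fb) \<mu> \<nu> * k \<nu>))) = 0"
        by (rule sum_zero4) (simp add: E)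
      have s2: "(\<Sum>l<4. eta l l * k l * (\<Sum>\<mu><4. \<Sum>\<nu><4. raise2 Fb \<mu> \<nu> *
          (f \<mu> \<nu> * k l + f \<nu> l * k \<mu> + f l \<mu> * k \<nu>))) = 0"
        by (rule sum_zero4) (simp add: C)
      have main: "lf * xi / 2 * K - A * Q2 + B * y / 4 * K = 0"
        using key[OF aF af, of k lf A B] s1 s2 unfolding xi_def K_def Q2_def y_def by simp
      have "A * ((b\<^sup>2 + 1/2 * x) * K + Q2) = K * (lf * xi / 2 + B * y / 4 + (b\<^sup>2 + 1/2 * x) * A)"
        using main by (simp add: algebra_simps)
      also have "\<dots> = 0" using br by simp
      finally have "(b\<^sup>2 + 1/2 * x) * K + Q2 = 0" using An by simp
      then show "(\<Sum>\<mu><4. \<Sum>\<nu><4.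
                 ((b\<^sup>2 + 1/2 * x) * eta \<mu> \<nu>
                  + (\<Sum>l<4. raise1 Fb \<mu> l * raise2 Fb l \<nu>)) * k \<mu> * k \<nu>) = 0"
        unfolding concl_split K_def Q2_def .
    qed
  qed
qed

end
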